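(* Let $T\ge 1$, $d=2T$, $\lambda,\mu>0$, $a\in\mathbb{R}$, $b,c>0$, and consider $F$ built from the functions $f_i$ described in the context. Let $x^\star$ be the unique minimizer of $F$. Then all blocks $x^\star_i$ of the first group are equal to a common vector $y^\star\in\mathbb{R}^d$, and all blocks of the second group are equal to a common vector $z^\star\in\mathbb{R}^d$. Moreover, for every $1\le i\le 2T-1$, $$w_{i+1}=Q_r\,w_i,$$ where $w_i=(z^\star_i,y^\star_i)^\top$ if $i$ is even and $w_i=(y^\star_i,z^\star_i)^\top$ if $i$ is odd. Here $r=\tfrac12$ if $n$ is even and $r=\tfrac{M}{n}$ if $n=2M+1$. With $s=\mu/\lambda$, $$Q_r=\begin{pmatrix}-\frac{r}{c} & \frac{c+s+r}{c}\\[2pt] -\frac{c+s+r}{c} & \frac{(c+s+r)^2}{cr}-\frac{c}{r}\end{pmatrix}.$$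
   Context: The objective is $F(x)=\frac1n\sum_{i=1}^n f_i(x_i)+\lambda\frac1{2n}\sum_{i=1}^n\|x_i-\bar x\|^2$ for $x=[x_1,\dots,x_n]\in\mathbb{R}^{nd}$, where $\bar x=\frac1n\sum_i x_i$. The functions below are written with $y=(y_1,\dots,y_{2T})\in\mathbb{R}^{2T}$. Even $n$. For $1\le i\le n/2$ (first group), $$f_i(y)=\tfrac{\mu}{2}\|y\|^2+ay_1+\tfrac{\lambda c}{2}\sum_{j=1}^{T-1}(y_{2j}-y_{2j+1})^2+\tfrac{\lambda b}{2}y_{2T}^2 .$$ For $n/2<i\le n$ (second group), $$f_i(y)=\tfrac{\mu}{2}\|y\|^2+\tfrac{\lambda c}{2}\sum_{j=0}^{T-1}(y_{2j+1}-y_{2j+2})^2 .$$ Odd $n=2M+1$ with $M\ge1$. For $1\le i\le M$ (first group), $$f_i(y)=\tfrac{M+1}{M}\tfrac{\mu}{2}\|y\|^2+ay_1+\tfrac{\lambda}{2}\tfrac{M+1}{M}c\sum_{j=1}^{T-1}(y_{2j}-y_{2j+1})^2+\tfrac{\lambda b}{2}y_{2T}^2 .$$ For $M<i\le n$ (second group), $f_i$ is the second-group function from the even case. *)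

theory Defs
  imports "HOL-Analysis.Analysis"
begin

text \<open>Vectors y in R^(2T) are represented as functions nat => real, using coordinates 1..2T.
Agents are indexed 1..n; a point x = [x_1,...,x_n] is a function nat => (nat => real).\<close>

definition sqnorm :: "nat \<Rightarrow> (nat \<Rightarrow> real) \<Rightarrow> real" where
  "sqnorm T y = (\<Sum>j=1..2*T. (y j)^2)"

definition f_first_even :: "nat \<Rightarrow> real \<Rightarrow> real \<Rightarrow> real \<Rightarrow> real \<Rightarrow> real \<Rightarrow> (nat \<Rightarrow> real) \<Rightarrow> real" where
  "f_first_even T lam mu a b c y =
     mu / 2 * sqnorm T y + a * y 1
     + lam * c / 2 * (\<Sum>j=1..T-1. (y (2*j) - y (2*j+1))^2)
     + lam * b / 2 * (y (2*T))^2"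

definition f_first_odd :: "nat \<Rightarrow> nat \<Rightarrow> real \<Rightarrow> real \<Rightarrow> real \<Rightarrow> real \<Rightarrow> real \<Rightarrow> (nat \<Rightarrow> real) \<Rightarrow> real" where
  "f_first_odd M T lam mu a b c y =
     (real M + 1) / real M * (mu / 2) * sqnorm T y + a * y 1
     + lam / 2 * ((real M + 1) / real M) * c * (\<Sum>j=1..T-1. (y (2*j) - y (2*j+1))^2)
     + lam * b / 2 * (y (2*T))^2"

definition f_second :: "nat \<Rightarrow> real \<Rightarrow> real \<Rightarrow> real \<Rightarrow> (nat \<Rightarrow> real) \<Rightarrow> real" where
  "f_second T lam mu c y =
     mu / 2 * sqnorm T y + lam * c / 2 * (\<Sum>j=0..T-1. (y (2*j+1) - y (2*j+2))^2)"

definition first_size :: "nat \<Rightarrow> nat" where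
  "first_size n = n div 2"

definition f_loc :: "nat \<Rightarrow> nat \<Rightarrow> real \<Rightarrow> real \<Rightarrow> real \<Rightarrow> real \<Rightarrow> real \<Rightarrow> nat \<Rightarrow> (nat \<Rightarrow> real) \<Rightarrow> real" where
  "f_loc n T lam mu a b c i =
     (if i \<le> first_size n then
        (if even n then f_first_even T lam mu a b c else f_first_odd (n div 2) T lam mu a b c)
      else f_second T lam mu c)"

definition xbar :: "nat \<Rightarrow> (nat \<Rightarrow> nat \<Rightarrow> real) \<Rightarrow> nat \<Rightarrow> real" where
  "xbar n x j = (1 / real n) * (\<Sum>i=1..n. x i j)"

definition Fobj :: "nat \<Rightarrow> nat \<Rightarrow> real \<Rightarrow> real \<Rightarrow> real \<Rightarrow> real \<Rightarrow> real \<Rightarrow> (nat \<Rightarrow> nat \<Rightarrow> real) \<Rightarrow> real" where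
  "Fobj n T lam mu a b c x =
     (1 / real n) * (\<Sum>i=1..n. f_loc n T lam mu a b c i (x i))
     + lam / (2 * real n) * (\<Sum>i=1..n. sqnorm T (\<lambda>j. x i j - xbar n x j))"

definition r_par :: "nat \<Rightarrow> real" where
  "r_par n = (if even n then 1/2 else real (n div 2) / real n)"

definition Qmat :: "real \<Rightarrow> real \<Rightarrow> real \<Rightarrow> real ^ 2 ^ 2" where
  "Qmat r s c = (let k = c + s + r in
     vector [vector [- r / c, k / c],
             vector [- k / c, k^2 / (c * r) - c / r]])"

definition wvec :: "(nat \<Rightarrow> real) \<Rightarrow> (nat \<Rightarrow> real) \<Rightarrow> nat \<Rightarrow> real ^ 2" where
  "wvec y z i = (if even i then vector [z i, y i] else vector [y i, z i])"

end

theory Submission imports Defs begin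

definition Gsq :: "nat \<Rightarrow> (nat \<Rightarrow> real) \<Rightarrow> (nat \<Rightarrow> real) \<Rightarrow> real" where
  "Gsq T u v = (\<Sum>j=1..2*T. u j * v j)"
definition ch1 :: "nat \<Rightarrow> (nat \<Rightarrow> real) \<Rightarrow> (nat \<Rightarrow> real) \<Rightarrow> real" where
  "ch1 T u v = (\<Sum>j=1..T-1. (u (2*j) - u (2*j+1)) * (v (2*j) - v (2*j+1)))"
definition ch2 :: "nat \<Rightarrow> (nat \<Rightarrow> real) \<Rightarrow> (nat \<Rightarrow> real) \<Rightarrow> real" where
  "ch2 T u v = (\<Sum>j=0..T-1. (u (2*j+1) - u (2*j+2)) * (v (2*j+1) - v (2*j+2)))"

lemma sum_sq_aff:
  fixes u v :: "nat \<Rightarrow> real"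
  shows "(\<Sum>j\<in>S. (u j + t * v j)^2) = (\<Sum>j\<in>S. (u j)^2) + t * (2 * (\<Sum>j\<in>S. u j * v j)) + t^2 * (\<Sum>j\<in>S. (v j)^2)"
  by (simp add: power2_sum power_mult_distrib sum.distrib sum_distrib_left algebra_simps)

lemma sqnorm_aff: "sqnorm T (\<lambda>j. u j + t * v j) = sqnorm T u + t * (2 * Gsq T u v) + t^2 * sqnorm T v"
  unfolding sqnorm_def Gsq_def by (rule sum_sq_aff)

lemma ch1_aff: "(\<Sum>j=1..T-1. (u (2*j) + t * v (2*j) - (u (2*j+1) + t * v (2*j+1)))^2)
  = (\<Sum>j=1..T-1. (u (2*j) - u (2*j+1))^2) + t * (2 * ch1 T u v) + t^2 * ch1 T v v"
proof -
  have "(\<Sum>j=1..T-1. (u (2*j) + t * v (2*j) - (u (2*j+1) + t * v (2*j+1)))^2)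
     = (\<Sum>j=1..T-1. ((u (2*j) - u (2*j+1)) + t * (v (2*j) - v (2*j+1)))^2)"
    by (rule sum.cong) (auto simp: algebra_simps)
  then show ?thesis unfolding sum_sq_aff ch1_def by (simp add: power2_eq_square)
qed

lemma ch2_aff: "(\<Sum>j=0..T-1. (u (2*j+1) + t * v (2*j+1) - (u (2*j+2) + t * v (2*j+2)))^2)
  = (\<Sum>j=0..T-1. (u (2*j+1) - u (2*j+2))^2) + t * (2 * ch2 T u v) + t^2 * ch2 T v v"
proof -
  have "(\<Sum>j=0..T-1. (u (2*j+1) + t * v (2*j+1) - (u (2*j+2) + t * v (2*j+2)))^2)
     = (\<Sum>j=0..T-1. ((u (2*j+1) - u (2*j+2)) + t * (v (2*j+1) - v (2*j+2)))^2)"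
    by (rule sum.cong) (auto simp: algebra_simps)
  then show ?thesis unfolding sum_sq_aff ch2_def by (simp add: power2_eq_square)
qed

definition G_fe where "G_fe T lam mu a b c u v = mu * Gsq T u v + a * v 1 + lam*c*ch1 T u v + lam*b*(u (2*T) * v (2*T))"
definition H_fe where "H_fe T lam mu b c v = mu/2 * sqnorm T v + lam*c/2 * ch1 T v v + lam*b/2*(v (2*T))^2"
definition G_fo where "G_fo M T lam mu a b c u v = (real M + 1) / real M * mu * Gsq T u v + a * v 1 + lam*((real M + 1) / real M)*c*ch1 T u v + lam*b*(u (2*T) * v (2*T))"
definition H_fo where "H_fo M T lam mu b c v = (real M + 1) / real M * (mu/2) * sqnorm T v + lam/2*((real M + 1) / real M)*c * ch1 T v v + lam*b/2*(v (2*T))^2"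
definition G_s where "G_s T lam mu c u v = mu * Gsq T u v + lam*c*ch2 T u v"
definition H_s where "H_s T lam mu c v = mu/2 * sqnorm T v + lam*c/2 * ch2 T v v"

lemma fe_aff: "f_first_even T lam mu a b c (\<lambda>j. u j + t * v j) = f_first_even T lam mu a b c u + t * G_fe T lam mu a b c u v + t^2 * H_fe T lam mu b c v"
  unfolding f_first_even_def G_fe_def H_fe_def sqnorm_aff ch1_aff
  by (simp add: power2_eq_square algebra_simps)

lemma fo_aff: "f_first_odd M T lam mu a b c (\<lambda>j. u j + t * v j) = f_first_odd M T lam mu a b c u + t * G_fo M T lam mu a b c u v + t^2 * H_fo M T lam mu b c v"
proof -
  define k where "k = (real M + 1) / real M"
  show ?thesis
    unfolding f_first_odd_def G_fo_def H_fo_def sqnorm_aff ch1_aff k_def[symmetric]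
    by (simp add: power2_eq_square algebra_simps)
qed

lemma fs_aff: "f_second T lam mu c (\<lambda>j. u j + t * v j) = f_second T lam mu c u + t * G_s T lam mu c u v + t^2 * H_s T lam mu c v"
  unfolding f_second_def G_s_def H_s_def sqnorm_aff ch2_aff
  by (simp add: power2_eq_square algebra_simps)


definition Gloc where "Gloc n T lam mu a b c i u v =
  (if i \<le> first_size n then (if even n then G_fe T lam mu a b c u v else G_fo (n div 2) T lam mu a b c u v)
   else G_s T lam mu c u v)"
definition Hloc where "Hloc n T lam mu b c i v =
  (if i \<le> first_size n then (if even n then H_fe T lam mu b c v else H_fo (n div 2) T lam mu b c v)
   else H_s T lam mu c v)"

lemma floc_aff: "f_loc n T lam mu a b c i (\<lambda>j. u j + t * v j) = f_loc n T lam mu a b c i u + t * Gloc n T lam mu a b c i u v + t^2 * Hloc n T lam mu b c i v"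
  unfolding f_loc_def Gloc_def Hloc_def by (simp add: fe_aff fo_aff fs_aff)

lemma xbar_aff: "xbar n (\<lambda>i j. x i j + t * E i j) j = xbar n x j + t * xbar n E j"
  unfolding xbar_def by (simp add: sum.distrib sum_distrib_left algebra_simps)

lemma Fobj_aff: "Fobj n T lam mu a b c (\<lambda>i j. x i j + t * E i j) = Fobj n T lam mu a b c x
  + t * ((1 / real n) * (\<Sum>i=1..n. Gloc n T lam mu a b c i (x i) (E i))
     + lam / (2 * real n) * (\<Sum>i=1..n. 2 * Gsq T (\<lambda>j. x i j - xbar n x j) (\<lambda>j. E i j - xbar n E j)))
  + t^2 * ((1 / real n) * (\<Sum>i=1..n. Hloc n T lam mu b c i (E i))
     + lam / (2 * real n) * (\<Sum>i=1..n. sqnorm T (\<lambda>j. E i j - xbar n E j)))"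
proof -
  have 1: "\<And>i. f_loc n T lam mu a b c i (\<lambda>j. x i j + t * E i j) = f_loc n T lam mu a b c i (x i) + t * Gloc n T lam mu a b c i (x i) (E i) + t^2 * Hloc n T lam mu b c i (E i)"
    using floc_aff[of n T lam mu a b c _ "x _" t "E _"] by simp
  have 2: "\<And>i. sqnorm T (\<lambda>j. x i j + t * E i j - xbar n (\<lambda>i j. x i j + t * E i j) j)
     = sqnorm T (\<lambda>j. x i j - xbar n x j) + t * (2 * Gsq T (\<lambda>j. x i j - xbar n x j) (\<lambda>j. E i j - xbar n E j)) + t^2 * sqnorm T (\<lambda>j. E i j - xbar n E j)"
  proof -
    fix i
    have "(\<lambda>j. x i j + t * E i j - xbar n (\<lambda>i j. x i j + t * E i j) j) = (\<lambda>j. (x i j - xbar n x j) + t * (E i j - xbar n E j))"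
      by (simp add: xbar_aff algebra_simps)
    then show "?thesis i" by (simp add: sqnorm_aff)
  qed
  show ?thesis
    unfolding Fobj_def 1 2
    by (simp add: sum.distrib sum_distrib_left algebra_simps)
qed

lemma quad_zero:
  fixes G H :: real
  assumes "\<forall>t. 0 \<le> G * t + H * t^2"
  shows "G = 0"
proof (rule ccontr)
  assume G: "G \<noteq> 0"
  define e where "e = 1 / (\<bar>H\<bar> + 1)"
  have e0: "e > 0" unfolding e_def by (simp add: add_pos_nonneg)
  have he: "H * e < 1" unfolding e_def
    by (simp add: divide_simps) (smt (verit) abs_ge_self)
  have "0 \<le> G * (- G * e) + H * (- G * e)^2" using assms by blast
  also have "\<dots> = G^2 * e * (H * e - 1)" by (simp add: power2_eq_square algebra_simps)
  also have "\<dots> < 0"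
    using G e0 he by (simp add: mult_pos_neg)
  finally show False by simp
qed


lemma Gloc_zero: "Gloc n T lam mu a b c i u (\<lambda>j. 0) = 0"
  unfolding Gloc_def G_fe_def G_fo_def G_s_def Gsq_def ch1_def ch2_def by simp

lemma sumD: assumes "n \<ge> 1" shows "(\<Sum>i=1..n. x i j - xbar n x j) = 0"
  using assms unfolding xbar_def by (simp add: sum_subtractf)

lemma Gsq_center: assumes "n \<ge> 1"
  shows "(\<Sum>i=1..n. Gsq T (\<lambda>j. x i j - xbar n x j) (\<lambda>j. E i j - xbar n E j)) = (\<Sum>i=1..n. Gsq T (\<lambda>j. x i j - xbar n x j) (E i))"
proof -
  have "(\<Sum>i=1..n. Gsq T (\<lambda>j. x i j - xbar n x j) (\<lambda>j. E i j - xbar n E j))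
    = (\<Sum>i=1..n. Gsq T (\<lambda>j. x i j - xbar n x j) (E i)) - (\<Sum>i=1..n. \<Sum>j=1..2*T. (x i j - xbar n x j) * xbar n E j)"
    unfolding Gsq_def by (simp add: sum_subtractf[symmetric] right_diff_distrib)
  also have "(\<Sum>i=1..n. \<Sum>j=1..2*T. (x i j - xbar n x j) * xbar n E j) = (\<Sum>j=1..2*T. (\<Sum>i=1..n. x i j - xbar n x j) * xbar n E j)"
    by (subst sum.swap) (simp add: sum_distrib_right)
  also have "\<dots> = 0" using sumD[OF assms] by simp
  finally show ?thesis by simp
qed

lemma block_stat:
  assumes min: "\<forall>x. Fobj n T lam mu a b c xs \<le> Fobj n T lam mu a b c x"
    and n: "n \<ge> 1" and p: "p \<in> {1..n}"
  shows "Gloc n T lam mu a b c p (xs p) v + lam * Gsq T (\<lambda>j. xs p j - xbar n xs j) v = 0"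
proof -
  define E where "E = (\<lambda>i j. if i = p then v j else (0::real))"
  define G where "G = (1 / real n) * (\<Sum>i=1..n. Gloc n T lam mu a b c i (xs i) (E i))
     + lam / (2 * real n) * (\<Sum>i=1..n. 2 * Gsq T (\<lambda>j. xs i j - xbar n xs j) (\<lambda>j. E i j - xbar n E j))"
  define H where "H = (1 / real n) * (\<Sum>i=1..n. Hloc n T lam mu b c i (E i))
     + lam / (2 * real n) * (\<Sum>i=1..n. sqnorm T (\<lambda>j. E i j - xbar n E j))"
  have "\<forall>t. 0 \<le> G * t + H * t^2"
  proof
    fix t
    have "Fobj n T lam mu a b c xs \<le> Fobj n T lam mu a b c (\<lambda>i j. xs i j + t * E i j)" using min by blast
    then show "0 \<le> G * t + H * t^2" unfolding Fobj_aff G_def H_def by (simp add: algebra_simps)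
  qed
  hence "G = 0" by (rule quad_zero)
  have Ei: "\<And>i. E i = (if i = p then v else (\<lambda>j. 0))" unfolding E_def by auto
  have s1: "(\<Sum>i=1..n. Gloc n T lam mu a b c i (xs i) (E i)) = Gloc n T lam mu a b c p (xs p) v"
    unfolding Ei using p by (simp add: Gloc_zero if_distrib cong: if_cong)
  have s2: "(\<Sum>i=1..n. Gsq T (\<lambda>j. xs i j - xbar n xs j) (E i)) = Gsq T (\<lambda>j. xs p j - xbar n xs j) v"
    unfolding Ei using p by (simp add: Gsq_def if_distrib cong: if_cong)
  have "G = (1 / real n) * (Gloc n T lam mu a b c p (xs p) v + lam * Gsq T (\<lambda>j. xs p j - xbar n xs j) v)"
    unfolding G_def s1 Gsq_center[OF n] sum_distrib_left[symmetric] s2 by (simp add: algebra_simps)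
  with \<open>G = 0\<close> n show ?thesis by simp
qed


lemma Gsq_diff: "Gsq T u d - Gsq T w d = Gsq T (\<lambda>j. u j - w j) d"
  unfolding Gsq_def by (simp add: sum_subtractf[symmetric] algebra_simps)
lemma ch1_diff: "ch1 T u d - ch1 T w d = ch1 T (\<lambda>j. u j - w j) d"
  unfolding ch1_def by (simp add: sum_subtractf[symmetric] algebra_simps)
lemma ch2_diff: "ch2 T u d - ch2 T w d = ch2 T (\<lambda>j. u j - w j) d"
  unfolding ch2_def by (simp add: sum_subtractf[symmetric] algebra_simps)
lemma Gsq_self: "Gsq T d d \<ge> 0" unfolding Gsq_def by (intro sum_nonneg) simp
lemma ch1_self: "ch1 T d d \<ge> 0" unfolding ch1_def by (intro sum_nonneg) simp
lemma ch2_self: "ch2 T d d \<ge> 0" unfolding ch2_def by (intro sum_nonneg) simp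

lemma Gloc_mono:
  assumes "lam > 0" "mu > 0" "b > 0" "c > 0"
  shows "Gloc n T lam mu a b c i u (\<lambda>j. u j - w j) - Gloc n T lam mu a b c i w (\<lambda>j. u j - w j) \<ge> 0"
proof -
  let ?d = "\<lambda>j. u j - w j"
  have g: "Gsq T u ?d - Gsq T w ?d \<ge> 0" using Gsq_self[of T ?d] by (simp add: Gsq_diff)
  have h1: "ch1 T u ?d - ch1 T w ?d \<ge> 0" using ch1_self[of T ?d] by (simp add: ch1_diff)
  have h2: "ch2 T u ?d - ch2 T w ?d \<ge> 0" using ch2_self[of T ?d] by (simp add: ch2_diff)
  have bb: "u (2*T) * ?d (2*T) - w (2*T) * ?d (2*T) \<ge> 0"
    by (simp add: left_diff_distrib[symmetric])
  define k where "k = (real (n div 2) + 1) / real (n div 2)"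
  have k: "k \<ge> 0" unfolding k_def by simp
  have e1: "G_fe T lam mu a b c u ?d - G_fe T lam mu a b c w ?d
     = mu * (Gsq T u ?d - Gsq T w ?d) + lam * c * (ch1 T u ?d - ch1 T w ?d) + lam * b * (u (2*T) * ?d (2*T) - w (2*T) * ?d (2*T))"
    unfolding G_fe_def by (simp add: algebra_simps)
  have e2: "G_fo (n div 2) T lam mu a b c u ?d - G_fo (n div 2) T lam mu a b c w ?d
     = k * mu * (Gsq T u ?d - Gsq T w ?d) + lam * k * c * (ch1 T u ?d - ch1 T w ?d) + lam * b * (u (2*T) * ?d (2*T) - w (2*T) * ?d (2*T))"
    unfolding G_fo_def k_def[symmetric] by (simp add: algebra_simps)
  have e3: "G_s T lam mu c u ?d - G_s T lam mu c w ?d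
     = mu * (Gsq T u ?d - Gsq T w ?d) + lam * c * (ch2 T u ?d - ch2 T w ?d)"
    unfolding G_s_def by (simp add: algebra_simps)
  have n1: "G_fe T lam mu a b c u ?d - G_fe T lam mu a b c w ?d \<ge> 0"
    unfolding e1 using g h1 bb assms by (intro add_nonneg_nonneg mult_nonneg_nonneg) auto
  have n2: "G_fo (n div 2) T lam mu a b c u ?d - G_fo (n div 2) T lam mu a b c w ?d \<ge> 0"
    unfolding e2 using g h1 bb k assms by (intro add_nonneg_nonneg mult_nonneg_nonneg) auto
  have n3: "G_s T lam mu c u ?d - G_s T lam mu c w ?d \<ge> 0"
    unfolding e3 using g h2 assms by (intro add_nonneg_nonneg mult_nonneg_nonneg) auto
  show ?thesis unfolding Gloc_def using n1 n2 n3 by auto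
qed

lemma group_eq:
  assumes min: "\<forall>x. Fobj n T lam mu a b c xs \<le> Fobj n T lam mu a b c x"
    and n: "n \<ge> 1" and p: "p \<in> {1..n}" and q: "q \<in> {1..n}"
    and pq: "p \<le> first_size n \<longleftrightarrow> q \<le> first_size n"
    and pos: "lam > 0" "mu > 0" "b > 0" "c > 0"
    and j: "j \<in> {1..2*T}"
  shows "xs p j = xs q j"
proof -
  let ?d = "\<lambda>j. xs p j - xs q j"
  have bp: "Gloc n T lam mu a b c p (xs p) ?d + lam * Gsq T (\<lambda>j. xs p j - xbar n xs j) ?d = 0"
    by (rule block_stat[OF min n p])
  have bq: "Gloc n T lam mu a b c q (xs q) ?d + lam * Gsq T (\<lambda>j. xs q j - xbar n xs j) ?d = 0"
    by (rule block_stat[OF min n q])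
  have same: "Gloc n T lam mu a b c q = Gloc n T lam mu a b c p"
    using pq by (simp add: Gloc_def fun_eq_iff)
  have mono: "Gloc n T lam mu a b c p (xs p) ?d - Gloc n T lam mu a b c p (xs q) ?d \<ge> 0"
    by (rule Gloc_mono[OF pos])
  have "Gsq T (\<lambda>j. xs p j - xbar n xs j) ?d - Gsq T (\<lambda>j. xs q j - xbar n xs j) ?d = Gsq T ?d ?d"
    by (simp add: Gsq_diff)
  hence "lam * Gsq T ?d ?d \<le> 0" using bp bq mono same by (simp add: algebra_simps)
  hence "Gsq T ?d ?d \<le> 0" using pos by (simp add: mult_le_0_iff)
  hence "Gsq T ?d ?d = 0" using Gsq_self[of T ?d] by linarith
  hence "\<forall>j\<in>{1..2*T}. ?d j * ?d j = 0" unfolding Gsq_def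
    by (subst (asm) sum_nonneg_eq_0_iff) auto
  with j show ?thesis by auto
qed

lemma Qmat_step:
  fixes lam mu c r p p' q q' :: real
  assumes lam: "lam > 0" and c: "c > 0" and r: "r > 0"
    and A: "mu * p + lam * c * (p - p') + lam * r * (p - q) = 0"
    and B: "mu * p' - lam * c * (p - p') + lam * r * (p' - q') = 0"
  shows "vector [p', q'] = Qmat r (mu / lam) c *v (vector [q, p] :: real^2)"
proof -
  define K where "K = c + mu / lam + r"
  have p': "p' = (K * p - r * q) / c"
    using A lam c unfolding K_def by (simp add: field_simps)
  have q': "q' = (K * p' - c * p) / r"
    using B lam r unfolding K_def by (simp add: field_simps)
  have e1: "p' = - r / c * q + K / c * p" using p' c by (simp add: field_simps)
  have e2: "q' = - K / c * q + (K^2 / (c * r) - c / r) * p"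
    unfolding q' p' using c r by (simp add: field_simps power2_eq_square)
  show ?thesis
    unfolding vec_eq_iff forall_2 Qmat_def Let_def K_def[symmetric]
    by (simp add: matrix_vector_mult_def sum_2 e1 e2)
qed

definition ek :: "nat \<Rightarrow> nat \<Rightarrow> real" where "ek k = (\<lambda>j. if j = k then 1 else 0)"

lemma Gsq_ek: "k \<in> {1..2*T} \<Longrightarrow> Gsq T u (ek k) = u k"
  unfolding Gsq_def ek_def by (simp add: if_distrib cong: if_cong)

lemma ch1_ek_even: assumes "1 \<le> m" "m \<le> T - 1" shows "ch1 T u (ek (2*m)) = u (2*m) - u (2*m+1)"
proof -
  have "ch1 T u (ek (2*m)) = (\<Sum>j=1..T-1. if j = m then u (2*m) - u (2*m+1) else 0)"
    unfolding ch1_def ek_def by (rule sum.cong) auto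
  then show ?thesis using assms by simp
qed

lemma ch1_ek_odd: assumes "1 \<le> m" "m \<le> T - 1" shows "ch1 T u (ek (2*m+1)) = - (u (2*m) - u (2*m+1))"
proof -
  have "ch1 T u (ek (2*m+1)) = (\<Sum>j=1..T-1. if j = m then - (u (2*m) - u (2*m+1)) else 0)"
    unfolding ch1_def ek_def by (rule sum.cong) auto
  then show ?thesis using assms by simp
qed

lemma ch2_ek_odd: assumes "m \<le> T - 1" shows "ch2 T u (ek (2*m+1)) = u (2*m+1) - u (2*m+2)"
proof -
  have "ch2 T u (ek (2*m+1)) = (\<Sum>j=0..T-1. if j = m then u (2*m+1) - u (2*m+2) else 0)"
    unfolding ch2_def ek_def by (rule sum.cong) auto
  then show ?thesis using assms by simp
qed

lemma ch2_ek_even: assumes "m \<le> T - 1" shows "ch2 T u (ek (2*m+2)) = - (u (2*m+1) - u (2*m+2))"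
proof -
  have "ch2 T u (ek (2*m+2)) = (\<Sum>j=0..T-1. if j = m then - (u (2*m+1) - u (2*m+2)) else 0)"
    unfolding ch2_def ek_def by (rule sum.cong) auto
  then show ?thesis using assms by simp
qed

lemma xbar_split:
  assumes "M \<le> n" and "\<forall>i\<in>{1..M}. x i j = y" and "\<forall>i\<in>{M+1..n}. x i j = z"
  shows "xbar n x j = (real M * y + (real n - real M) * z) / real n"
proof -
  have "{1..n} = {1..M} \<union> {M+1..n}" using assms by auto
  hence "(\<Sum>i=1..n. x i j) = (\<Sum>i=1..M. x i j) + (\<Sum>i=M+1..n. x i j)"
    by (simp add: sum.union_disjoint)
  also have "\<dots> = (\<Sum>i=1..M. y) + (\<Sum>i=M+1..n. z)" using assms by simp
  also have "\<dots> = real M * y + (real n - real M) * z" using assms by (simp add: of_nat_diff)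
  finally show ?thesis unfolding xbar_def by simp
qed


theorem mainTheorem2:
  fixes n T :: nat and lam mu a b c :: real and xs :: "nat \<Rightarrow> nat \<Rightarrow> real"
  assumes "T \<ge> 1" and "n \<ge> 2"
    and "lam > 0" and "mu > 0" and "b > 0" and "c > 0"
    and minimizer: "\<forall>x. Fobj n T lam mu a b c xs \<le> Fobj n T lam mu a b c x"
  shows "\<exists>y z :: nat \<Rightarrow> real.
           (\<forall>i\<in>{1..first_size n}. \<forall>j\<in>{1..2*T}. xs i j = y j)
         \<and> (\<forall>i\<in>{first_size n + 1..n}. \<forall>j\<in>{1..2*T}. xs i j = z j)
         \<and> (\<forall>i\<in>{1..2*T-1}. wvec y z (i+1) = Qmat (r_par n) (mu / lam) c *v wvec y z i)"
proof -
  note pos = assms(3-6)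
  define M where "M = first_size n"
  have M1: "M \<ge> 1" and Mn: "M < n" using assms(2) unfolding M_def first_size_def by auto
  have n1: "n \<ge> 1" using assms(2) by simp
  define y where "y = xs 1"
  define z where "z = xs n"
  have grp1: "\<forall>i\<in>{1..M}. \<forall>j\<in>{1..2*T}. xs i j = y j"
    unfolding y_def using M1 Mn
    by (intro ballI group_eq[OF minimizer n1 _ _ _ pos]) (auto simp: M_def)
  have grp2: "\<forall>i\<in>{M+1..n}. \<forall>j\<in>{1..2*T}. xs i j = z j"
    unfolding z_def using M1 Mn
    by (intro ballI group_eq[OF minimizer n1 _ _ _ pos]) (auto simp: M_def)
  define r where "r = real M / real n"
  have r0: "r > 0" unfolding r_def using M1 Mn by simp
  have rpar: "r_par n = r" unfolding r_def r_par_def M_def first_size_def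
    using assms(2) by (auto elim!: evenE)
  have xb: "xbar n xs k = (real M * y k + (real n - real M) * z k) / real n" if k: "k \<in> {1..2*T}" for k
    using grp1 grp2 k Mn by (intro xbar_split) auto
  have zd: "z k - xbar n xs k = r * (z k - y k)" if k: "k \<in> {1..2*T}" for k
    unfolding xb[OF k] r_def using n1 by (simp add: field_simps)
  have yd: "y k - xbar n xs k = ((real n - real M) / real n) * (y k - z k)" if k: "k \<in> {1..2*T}" for k
    unfolding xb[OF k] using n1 by (simp add: field_simps)
  have S: "mu * z k + lam * c * ch2 T z (ek k) + lam * r * (z k - y k) = 0" if k: "k \<in> {1..2*T}" for k
  proof -
    have "Gloc n T lam mu a b c n (xs n) (ek k) + lam * Gsq T (\<lambda>j. xs n j - xbar n xs j) (ek k) = 0"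
      using n1 by (intro block_stat[OF minimizer]) auto
    moreover have "Gloc n T lam mu a b c n (xs n) (ek k) = G_s T lam mu c z (ek k)"
      unfolding Gloc_def z_def using Mn M_def by simp
    ultimately have "mu * z k + lam * c * ch2 T z (ek k) + lam * (z k - xbar n xs k) = 0"
      using k unfolding G_s_def by (simp add: Gsq_ek z_def algebra_simps)
    then show ?thesis unfolding zd[OF k] by (simp add: algebra_simps)
  qed
  obtain kap where kap0: "kap > 0" and kapr: "(real n - real M) / real n = kap * r"
    and kapG: "\<And>k. ek k 1 = 0 \<Longrightarrow> ek k (2*T) = 0 \<Longrightarrow>
       Gloc n T lam mu a b c 1 y (ek k) = kap * (mu * Gsq T y (ek k) + lam * c * ch1 T y (ek k))"
  proof (cases "even n")
    case True
    then have "real n - real M = real M" unfolding M_def first_size_def by (auto elim!: evenE)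
    then show ?thesis using that[of 1] True M1 unfolding Gloc_def G_fe_def r_def
      by (auto simp: M_def algebra_simps)
  next
    case False
    then have nM: "real n = 2 * real M + 1" unfolding M_def first_size_def by (auto elim!: oddE)
    show ?thesis
    proof (rule that[of "(real M + 1) / real M"])
      show "(real M + 1) / real M > 0" using M1 by simp
      show "(real n - real M) / real n = (real M + 1) / real M * r"
      proof -
        have "real M \<noteq> 0" "2 * real M + 1 \<noteq> 0" using M1 by auto
        then have "(real M + 1) / real M * (real M / (2 * real M + 1)) = (real M + 1) / (2 * real M + 1)"
          by simp
        moreover have "2 * real M + 1 - real M = real M + 1" by simp
        ultimately show ?thesis unfolding r_def nM by simp
      qed
      fix k assume "ek k 1 = 0" "ek k (2*T) = 0"
      then show "Gloc n T lam mu a b c 1 y (ek k) = (real M + 1) / real M * (mu * Gsq T y (ek k) + lam * c * ch1 T y (ek k))"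
        unfolding Gloc_def G_fo_def using False M1 by (simp add: M_def first_size_def algebra_simps)
    qed
  qed
  have F: "mu * y k + lam * c * ch1 T y (ek k) + lam * r * (y k - z k) = 0"
    if k: "k \<in> {1..2*T}" and k1: "k \<noteq> 1" and k2: "k \<noteq> 2*T" for k
  proof -
    have bs: "Gloc n T lam mu a b c 1 (xs 1) (ek k) + lam * Gsq T (\<lambda>j. xs 1 j - xbar n xs j) (ek k) = 0"
      using n1 by (intro block_stat[OF minimizer]) auto
    have "kap * (mu * y k + lam * c * ch1 T y (ek k)) + lam * (kap * r) * (y k - z k) = 0"
    proof -
      have e: "ek k 1 = 0" "ek k (2*T) = 0" using k1 k2 by (auto simp: ek_def)
      have g1: "Gsq T y (ek k) = y k" using k by (rule Gsq_ek)
      have g2: "Gsq T (\<lambda>j. xs 1 j - xbar n xs j) (ek k) = y k - xbar n xs k"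
        using k by (simp add: Gsq_ek y_def)
      have "lam * (y k - xbar n xs k) = lam * (kap * r) * (y k - z k)" unfolding yd[OF k] kapr by simp
      then show ?thesis using bs kapG[OF e] g1 g2 unfolding y_def[symmetric]
        by (simp add: algebra_simps)
    qed
    hence "kap * (mu * y k + lam * c * ch1 T y (ek k) + lam * r * (y k - z k)) = 0"
      by (simp add: algebra_simps)
    with kap0 show ?thesis by simp
  qed
  show ?thesis
  proof (intro exI conjI)
    show "\<forall>i\<in>{1..first_size n}. \<forall>j\<in>{1..2*T}. xs i j = y j" using grp1 M_def by simp
    show "\<forall>i\<in>{first_size n + 1..n}. \<forall>j\<in>{1..2*T}. xs i j = z j" using grp2 M_def by simp
    show "\<forall>i\<in>{1..2*T-1}. wvec y z (i+1) = Qmat (r_par n) (mu / lam) c *v wvec y z i"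
    proof
      fix i assume i: "i \<in> {1..2*T-1}"
      show "wvec y z (i+1) = Qmat (r_par n) (mu / lam) c *v wvec y z i"
      proof (cases "even i")
        case True
        then obtain m where im: "i = 2*m" by (auto elim!: evenE)
        have m: "1 \<le> m" "m \<le> T - 1" using i im by auto
        have A: "mu * y i + lam * c * (y i - y (i+1)) + lam * r * (y i - z i) = 0"
          using F[of i] ch1_ek_even[OF m, of y] i im by auto
        have B: "mu * y (i+1) - lam * c * (y i - y (i+1)) + lam * r * (y (i+1) - z (i+1)) = 0"
        proof -
          have "i+1 \<noteq> 2*T" "i+1 \<le> 2*T" using im i by presburger+
          then have f: "mu * y (2*m+1) + lam * c * ch1 T y (ek (2*m+1)) + lam * r * (y (2*m+1) - z (2*m+1)) = 0"
            using F[of "i+1"] i im by auto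
          from f[unfolded ch1_ek_odd[OF m]] show ?thesis using im by (simp add: algebra_simps)
        qed
        show ?thesis unfolding wvec_def rpar using True
          using Qmat_step[OF pos(1) pos(4) r0 A B] by simp
      next
        case False
        then obtain m where im: "i = 2*m+1" by (auto elim!: oddE)
        have m: "m \<le> T - 1" using i im by auto
        have A: "mu * z i + lam * c * (z i - z (i+1)) + lam * r * (z i - y i) = 0"
          using S[of i] ch2_ek_odd[OF m, of z] i im by auto
        have B: "mu * z (i+1) - lam * c * (z i - z (i+1)) + lam * r * (z (i+1) - y (i+1)) = 0"
        proof -
          have f: "mu * z (2*m+2) + lam * c * ch2 T z (ek (2*m+2)) + lam * r * (z (2*m+2) - y (2*m+2)) = 0"
            using S[of "2*m+2"] i im by auto
          from f[unfolded ch2_ek_even[OF m]] show ?thesis using im by (simp add: algebra_simps)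
        qed
        show ?thesis unfolding wvec_def rpar using False
          using Qmat_step[OF pos(1) pos(4) r0 A B] by simp
      qed
    qed
  qed
qed

end
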